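(* Let $n$ and $d$ be positive integers and $N(n,d,0)=\{\mathbf{s}_d\in A(d): s_{(n-1)\bmod d}=s_{d-1}\}$. If $d$ is composite, then $$|N(n,d,0)|=\begin{cases}|A(d)|=\sum_{e\mid d}\mu(e)2^{d/e}, & d\mid n,\\ 2^{d-1}-2-\sum_{e\mid d,\,1<e<d}|N(n,e,0)|, & d\nmid n.\end{cases}$$ If $d$ is prime, then $|N(n,d,0)|=|A(d)|=2^d-2$ if $d\mid n$, and $|N(n,d,0)|=2^{d-1}-2$ if $d\nmid n$.
   Context: Sequences are binary (entries in $\mathbb{Z}_2$); $x\bmod d$ is the least nonnegative residue. A length-$m$ sequence is periodic if it is the concatenation of $m/e$ copies of a length-$e$ sequence for a proper divisor $e$ of $m$, aperiodic otherwise. $A(d)$ is the set of aperiodic binary sequences $\mathbf{s}_d=(s_0,\dots,s_{d-1})$ of length $d$. $\mu$ is the Möbius function: $\mu(1)=1$, $\mu(m)=(-1)^k$ if $m$ is a product of $k$ distinct primes, $\mu(m)=0$ if $m$ is divisible by the square of a prime. *)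

theory Defs
  imports "HOL-Computational_Algebra.Primes"
begin

text \<open>Binary sequences (entries in Z_2) are lists of bool of the given length.\<close>

definition periodic_seq :: "bool list \<Rightarrow> bool" where
  "periodic_seq s \<longleftrightarrow>
     (\<exists>e u. e dvd length s \<and> e < length s \<and> length u = e \<and>
            s = concat (replicate (length s div e) u))"

definition aperiodic_seqs :: "nat \<Rightarrow> bool list set" where
  "aperiodic_seqs d = {s. length s = d \<and> \<not> periodic_seq s}"

definition N0 :: "nat \<Rightarrow> nat \<Rightarrow> bool list set" where
  "N0 n d = {s \<in> aperiodic_seqs d. s ! ((n - 1) mod d) = s ! (d - 1)}"

definition mobius :: "nat \<Rightarrow> int" where
  "mobius m = (if \<exists>p. prime p \<and> p ^ 2 dvd m then 0
               else (-1) ^ card (prime_factors m))"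

end

theory Submission
  imports Defs
begin


definition rep :: "nat \<Rightarrow> bool list \<Rightarrow> bool list" where
  "rep k u = concat (replicate k u)"

lemma length_rep[simp]: "length (rep k u) = k * length u"
  unfolding rep_def by (induction k) auto

lemma nth_rep: "i < k * length u \<Longrightarrow> rep k u ! i = u ! (i mod length u)"
proof (induction k arbitrary: i)
  case 0 then show ?case by simp
next
  case (Suc k)
  have r: "rep (Suc k) u = u @ rep k u" unfolding rep_def by simp
  show ?case
  proof (cases "i < length u")
    case True then show ?thesis by (simp add: r nth_append)
  next
    case False
    then have "i - length u < k * length u" using Suc.prems by auto
    then have "rep k u ! (i - length u) = u ! ((i - length u) mod length u)" using Suc.IH by blast
    moreover have "(i - length u) mod length u = i mod length u" using False
      by (simp add: le_mod_geq)
    ultimately show ?thesis using False by (simp add: r nth_append)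
  qed
qed

definition hp :: "bool list \<Rightarrow> nat \<Rightarrow> bool" where
  "hp s e \<longleftrightarrow> 0 < e \<and> e dvd length s \<and> (\<forall>i<length s. s ! i = s ! (i mod e))"

lemma periodic_iff: "periodic_seq s \<longleftrightarrow> (\<exists>e. hp s e \<and> e < length s)"
proof
  assume "periodic_seq s"
  then obtain e u where e: "e dvd length s" "e < length s" "length u = e"
    "s = rep (length s div e) u" unfolding periodic_seq_def rep_def by blast
  have e0: "e > 0" using e by (cases "e = 0") auto
  have len: "length s = (length s div e) * e" using e by simp
  have "\<forall>i<length s. s ! i = s ! (i mod e)"
  proof (intro allI impI)
    fix i assume i: "i < length s"
    have "i mod e < length s" using e0 e(2) by (meson mod_less_divisor order.strict_trans)
    then show "s ! i = s ! (i mod e)" using i len e(3) e(4) nth_rep[of i "length s div e" u]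
      nth_rep[of "i mod e" "length s div e" u] by (metis mod_mod_trivial)
  qed
  then show "\<exists>e. hp s e \<and> e < length s" using e e0 unfolding hp_def by blast
next
  assume "\<exists>e. hp s e \<and> e < length s"
  then obtain e where e: "hp s e" "e < length s" by blast
  have e0: "0 < e" "e dvd length s" and h: "\<forall>i<length s. s ! i = s ! (i mod e)"
    using e unfolding hp_def by auto
  have "s = rep (length s div e) (take e s)"
  proof (rule nth_equalityI)
    show "length s = length (rep (length s div e) (take e s))" using e e0 by simp
    fix i assume i: "i < length s"
    have "rep (length s div e) (take e s) ! i = take e s ! (i mod e)"
      using nth_rep[of i "length s div e" "take e s"] i e e0 by simp
    also have "\<dots> = s ! (i mod e)" using e0 by simp
    finally show "s ! i = rep (length s div e) (take e s) ! i" using h i by simp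
  qed
  then show "periodic_seq s" unfolding periodic_seq_def rep_def
    using e e0 by (intro exI[of _ e] exI[of _ "take e s"]) auto
qed



definition sinv :: "(nat \<Rightarrow> bool) \<Rightarrow> nat \<Rightarrow> bool" where
  "sinv f k \<longleftrightarrow> (\<forall>i. f (i + k) = f i)"

lemma sinv_mult: "sinv f a \<Longrightarrow> sinv f (m * a)"
proof (induction m)
  case 0 then show ?case by (simp add: sinv_def)
next
  case (Suc m)
  show ?case unfolding sinv_def
  proof
    fix i
    have "f (i + Suc m * a) = f ((i + m * a) + a)" by (simp add: algebra_simps)
    also have "\<dots> = f (i + m * a)" using Suc.prems unfolding sinv_def by blast
    also have "\<dots> = f i" using Suc unfolding sinv_def by blast
    finally show "f (i + Suc m * a) = f i" .
  qed
qed

lemma sinv_diff: "sinv f a \<Longrightarrow> sinv f b \<Longrightarrow> b \<le> a \<Longrightarrow> sinv f (a - b)"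
  unfolding sinv_def
proof (intro allI)
  fix i assume a: "\<forall>i. f (i + a) = f i" and b: "\<forall>i. f (i + b) = f i" and ba: "b \<le> a"
  have "f (i + (a - b)) = f (i + (a - b) + b)" using b by simp
  also have "i + (a - b) + b = i + a" using ba by simp
  finally show "f (i + (a - b)) = f i" using a by simp
qed

lemma sinv_mod: "sinv f a \<Longrightarrow> sinv f b \<Longrightarrow> sinv f (a mod b)"
proof -
  assume a: "sinv f a" and b: "sinv f b"
  have "sinv f (a - (a div b) * b)" using sinv_diff[OF a sinv_mult[OF b]]
    by (simp add: div_times_less_eq_dividend)
  then show ?thesis by (simp add: minus_div_mult_eq_mod)
qed

lemma sinv_gcd: "sinv f a \<Longrightarrow> sinv f b \<Longrightarrow> sinv f (gcd a b)"
proof (induction a b rule: gcd_nat_induct)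
  case (step m n)
  then show ?case using sinv_mod by (metis gcd_red_nat)
qed simp

lemma sinv_red: "sinv f e \<Longrightarrow> f i = f (i mod e)"
proof -
  assume "sinv f e"
  then have "sinv f ((i div e) * e)" by (rule sinv_mult)
  then have "f (i mod e + (i div e) * e) = f (i mod e)" unfolding sinv_def by blast
  then show ?thesis by simp
qed

lemma hp_sinv:
  assumes "length s = d" "d > 0" "e > 0" "e dvd d"
  shows "hp s e \<longleftrightarrow> sinv (\<lambda>i. s ! (i mod d)) e"
proof
  assume h: "hp s e"
  show "sinv (\<lambda>i. s ! (i mod d)) e" unfolding sinv_def
  proof
    fix i
    have "s ! ((i + e) mod d) = s ! ((i + e) mod d mod e)" using h assms unfolding hp_def by simp
    also have "\<dots> = s ! ((i + e) mod e)" using assms(4) by (simp add: mod_mod_cancel)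
    also have "\<dots> = s ! (i mod d mod e)" using assms(4) by (simp add: mod_mod_cancel)
    also have "\<dots> = s ! (i mod d)" using h assms unfolding hp_def by simp
    finally show "s ! ((i + e) mod d) = s ! (i mod d)" .
  qed
next
  assume h: "sinv (\<lambda>i. s ! (i mod d)) e"
  have "\<forall>i<length s. s ! i = s ! (i mod e)"
  proof (intro allI impI)
    fix i assume i: "i < length s"
    have "i mod e < d" using assms by (meson dvd_imp_le mod_less_divisor order.strict_trans2)
    then show "s ! i = s ! (i mod e)" using sinv_red[OF h, of i] i assms by simp
  qed
  then show "hp s e" unfolding hp_def using assms by simp
qed

lemma hp_gcd: "hp s a \<Longrightarrow> hp s b \<Longrightarrow> length s > 0 \<Longrightarrow> hp s (gcd a b)"
proof -
  assume a: "hp s a" and b: "hp s b" and l: "length s > 0"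
  have a0: "a > 0" "a dvd length s" using a unfolding hp_def by auto
  have b0: "b > 0" "b dvd length s" using b unfolding hp_def by auto
  have g: "gcd a b > 0" "gcd a b dvd length s" using a0 b0 by (auto intro: dvd_trans)
  have "sinv (\<lambda>i. s ! (i mod length s)) a" using hp_sinv[OF refl l a0] a by simp
  moreover have "sinv (\<lambda>i. s ! (i mod length s)) b" using hp_sinv[OF refl l b0] b by simp
  ultimately have "sinv (\<lambda>i. s ! (i mod length s)) (gcd a b)" by (rule sinv_gcd)
  then show ?thesis using hp_sinv[OF refl l g] by simp
qed

lemma hpD: "hp s e \<Longrightarrow> i < length s \<Longrightarrow> s ! i = s ! (i mod e)"
  unfolding hp_def by blast

lemma hpD2: "hp s e \<Longrightarrow> 0 < e \<and> e dvd length s"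
  unfolding hp_def by blast

lemma hp_sub:
  assumes "hp s g" "g dvd e" "e \<le> length s" "length u = e" "\<forall>i<e. u ! i = s ! i"
  shows "hp u g"
proof -
  have g0: "g > 0" using hpD2[OF assms(1)] by auto
  have "\<forall>i<e. u ! i = u ! (i mod g)"
  proof (intro allI impI)
    fix i assume i: "i < e"
    have "i mod g \<le> i" by simp
    then have ig: "i mod g < e" using i by linarith
    have "u ! i = s ! i" using assms(5) i by blast
    also have "\<dots> = s ! (i mod g)" using hpD[OF assms(1)] i assms(3) by simp
    also have "\<dots> = u ! (i mod g)" using assms(5) ig by simp
    finally show "u ! i = u ! (i mod g)" .
  qed
  then show ?thesis using g0 assms(2,4) unfolding hp_def by simp
qed

lemma aper_iff: "u \<in> aperiodic_seqs e \<longleftrightarrow> length u = e \<and> (\<forall>g. hp u g \<longrightarrow> \<not> g < e)"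
  unfolding aperiodic_seqs_def mem_Collect_eq periodic_iff by blast

lemma hp_rep:
  assumes e: "e > 0" "length u = e" shows "hp (rep k u) e"
proof -
  have "\<forall>i<length (rep k u). rep k u ! i = rep k u ! (i mod e)"
  proof (intro allI impI)
    fix i assume i: "i < length (rep k u)"
    have "i mod e \<le> i" by simp
    moreover have "i < k * length u" using i by simp
    ultimately have i2: "i mod e < k * length u" by linarith
    show "rep k u ! i = rep k u ! (i mod e)"
      using nth_rep[of i k u] nth_rep[OF i2] i e by simp
  qed
  then show ?thesis unfolding hp_def using e by simp
qed

lemma rep_unique:
  assumes u: "u \<in> aperiodic_seqs e" and u': "u' \<in> aperiodic_seqs e'"
    and e: "e > 0" "e dvd d" and e': "e' > 0" "e' dvd d" and d: "d > 0"
    and eq: "rep (d div e) u = rep (d div e') u'"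
  shows "e = e'"
proof -
  let ?s = "rep (d div e) u"
  have lu: "length u = e" "length u' = e'" using u u' aper_iff by auto
  have ls: "length ?s = d" using lu e by simp
  have h1: "hp ?s e" using hp_rep e lu by simp
  have h2: "hp ?s e'" unfolding eq using hp_rep e' lu by simp
  have "length ?s > 0" using ls d by simp
  then have hg: "hp ?s (gcd e e')" using hp_gcd[OF h1 h2] by blast
  have le: "e \<le> d" "e' \<le> d" using e e' d by (auto intro: dvd_imp_le)
  have "\<forall>i<e. u ! i = ?s ! i" using lu e le by (auto simp: nth_rep)
  then have "hp u (gcd e e')" using hp_sub[OF hg _ _ lu(1)] ls le by simp
  then have g1: "\<not> gcd e e' < e" using u aper_iff by blast
  have "\<forall>i<e'. u' ! i = ?s ! i" unfolding eq using lu e' le by (auto simp: nth_rep)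
  then have "hp u' (gcd e e')" using hp_sub[OF hg _ _ lu(2)] ls le by simp
  then have g2: "\<not> gcd e e' < e'" using u' aper_iff by blast
  have "gcd e e' \<le> e" "gcd e e' \<le> e'" using e e' by (auto intro: dvd_imp_le)
  then show ?thesis using g1 g2 by linarith
qed

lemma rep_exists:
  assumes s: "length s = d" and d: "d > 0"
  shows "\<exists>e u. e dvd d \<and> e > 0 \<and> u \<in> aperiodic_seqs e \<and> s = rep (d div e) u"
proof -
  have hd: "hp s d" using s d unfolding hp_def by simp
  define e where "e = (LEAST e. hp s e)"
  have he: "hp s e" unfolding e_def using hd by (rule LeastI)
  have min: "\<And>g. hp s g \<Longrightarrow> e \<le> g" unfolding e_def by (rule Least_le)
  have e0: "e > 0" "e dvd d" using hpD2[OF he] s by auto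
  have ed: "e \<le> d" using min hd .
  define u where "u = take e s"
  have lu: "length u = e" using ed s u_def by simp
  have srep: "s = rep (d div e) u"
  proof (rule nth_equalityI)
    show "length s = length (rep (d div e) u)" using lu e0 s by simp
    fix i assume i: "i < length s"
    have "i mod e < e" using e0 by simp
    have "s ! i = s ! (i mod e)" using hpD[OF he i] .
    also have "\<dots> = u ! (i mod e)" using \<open>i mod e < e\<close> u_def by simp
    also have "\<dots> = rep (d div e) u ! i" using nth_rep[of i "d div e" u] i s lu e0 by simp
    finally show "s ! i = rep (d div e) u ! i" .
  qed
  have "\<forall>g. hp u g \<longrightarrow> \<not> g < e"
  proof (intro allI impI notI)
    fix g assume hg: "hp u g" and ge: "g < e"
    have g0: "g > 0" "g dvd e" using hpD2[OF hg] lu by auto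
    have "hp s g"
    proof -
      have "\<forall>i<d. s ! i = s ! (i mod g)"
      proof (intro allI impI)
        fix i assume i: "i < d"
        have "s ! i = u ! (i mod e)" using srep i lu e0 by (simp add: nth_rep)
        also have "\<dots> = u ! (i mod e mod g)" using hpD[OF hg] lu e0 by simp
        also have "\<dots> = u ! (i mod g)" using g0 by (simp add: mod_mod_cancel)
        also have "\<dots> = s ! (i mod g)"
        proof -
          have "i mod g < e" using g0 ge by (meson mod_less_divisor less_trans)
          then show ?thesis unfolding u_def by simp
        qed
        finally show "s ! i = s ! (i mod g)" .
      qed
      then show ?thesis unfolding hp_def using g0 e0 s by (auto intro: dvd_trans)
    qed
    then show False using min ge by fastforce
  qed
  then have "u \<in> aperiodic_seqs e" using aper_iff lu by blast
  then show ?thesis using e0 srep by blast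
qed



lemma fin_len: "finite {xs :: bool list. length xs = n}"
  using finite_lists_length_eq[of "UNIV :: bool set" n] by simp

lemma card_len: "card {xs :: bool list. length xs = n} = 2 ^ n"
  using card_lists_length_eq[of "UNIV :: bool set" n] by simp

lemma take_rep: "k > 0 \<Longrightarrow> take (length u) (rep k u) = u"
  unfolding rep_def by (cases k) auto

lemma decomp:
  assumes d: "d > 0"
    and Q: "\<And>e u. e dvd d \<Longrightarrow> e > 0 \<Longrightarrow> length u = e \<Longrightarrow> Q (rep (d div e) u) = Q u"
  shows "card {s. length s = d \<and> Q s} = (\<Sum>e | e dvd d. card {u \<in> aperiodic_seqs e. Q u})"
proof -
  let ?D = "{e. e dvd d}"
  let ?B = "\<lambda>e. {u \<in> aperiodic_seqs e. Q u}"
  have finD: "finite ?D" using d by simp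
  have eq: "{s. length s = d \<and> Q s} = (\<Union>e\<in>?D. rep (d div e) ` ?B e)"
  proof
    show "{s. length s = d \<and> Q s} \<subseteq> (\<Union>e\<in>?D. rep (d div e) ` ?B e)"
    proof
      fix s assume "s \<in> {s. length s = d \<and> Q s}"
      then have s: "length s = d" "Q s" by auto
      obtain e u where eu: "e dvd d" "e > 0" "u \<in> aperiodic_seqs e" "s = rep (d div e) u"
        using rep_exists[OF s(1) d] by blast
      have "length u = e" using eu(3) unfolding aperiodic_seqs_def by simp
      then have "Q u" using Q[OF eu(1,2)] eu(4) s(2) by simp
      then show "s \<in> (\<Union>e\<in>?D. rep (d div e) ` ?B e)" using eu by blast
    qed
  next
    show "(\<Union>e\<in>?D. rep (d div e) ` ?B e) \<subseteq> {s. length s = d \<and> Q s}"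
    proof
      fix s assume "s \<in> (\<Union>e\<in>?D. rep (d div e) ` ?B e)"
      then obtain e u where eu: "e dvd d" "u \<in> aperiodic_seqs e" "Q u" "s = rep (d div e) u"
        by blast
      have e0: "e > 0" using eu(1) d by (cases "e = 0") auto
      have lu: "length u = e" using eu(2) unfolding aperiodic_seqs_def by simp
      have "length s = d" using eu(1,4) lu by simp
      moreover have "Q s" using Q[OF eu(1) e0 lu] eu by simp
      ultimately show "s \<in> {s. length s = d \<and> Q s}" by simp
    qed
  qed
  have finB: "finite (?B e)" for e
    by (rule finite_subset[OF _ fin_len[of e]]) (auto simp: aperiodic_seqs_def)
  have cardB: "card (rep (d div e) ` ?B e) = card (?B e)" if e: "e \<in> ?D" for e
  proof (rule card_image, rule inj_onI)
    fix u v assume u: "u \<in> ?B e" and v: "v \<in> ?B e" and eq: "rep (d div e) u = rep (d div e) v"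
    have lu: "length u = e" "length v = e" using u v unfolding aperiodic_seqs_def by auto
    have "d div e > 0" using e d by (auto intro: dvd_imp_le simp: div_greater_zero_iff)
    then show "u = v" using take_rep[of "d div e" u] take_rep[of "d div e" v] lu eq by simp
  qed
  have disj: "rep (d div e) ` ?B e \<inter> rep (d div e') ` ?B e' = {}"
    if "e \<in> ?D" "e' \<in> ?D" "e \<noteq> e'" for e e'
  proof (rule ccontr)
    assume "rep (d div e) ` ?B e \<inter> rep (d div e') ` ?B e' \<noteq> {}"
    then obtain u v where uv: "u \<in> ?B e" "v \<in> ?B e'" "rep (d div e) u = rep (d div e') v" by blast
    have "e > 0" "e' > 0" using that d by (auto intro!: Nat.gr0I)
    then have "e = e'" using rep_unique[of u e v e' d] uv that d by blast
    then show False using that by blast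
  qed
  have "card {s. length s = d \<and> Q s} = (\<Sum>e\<in>?D. card (rep (d div e) ` ?B e))"
    unfolding eq by (rule card_UN_disjoint[OF finD]) (use finB disj in auto)
  also have "\<dots> = (\<Sum>e\<in>?D. card (?B e))" using cardB by (rule sum.cong[OF refl])
  finally show ?thesis .
qed



lemma mod_pred: fixes d e :: nat assumes "e dvd d" "d > 0" "e > 0" shows "(d - 1) mod e = e - 1"
proof -
  obtain m where m: "d = e * m" using assms(1) by (rule dvdE)
  have "m \<noteq> 0" using m assms(2) by (cases "m = 0") auto
  then have m0: "m \<ge> 1" by simp
  have me: "m * e \<ge> e" using m0 by simp
  have "(m - 1) * e = m * e - e" by (simp add: diff_mult_distrib)
  then have "d - 1 = (m - 1) * e + (e - 1)" using m me assms(3) by (simp add: mult.commute)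
  then have "(d - 1) mod e = ((e - 1) + (m - 1) * e) mod e" by (simp add: add.commute)
  also have "\<dots> = (e - 1) mod e" by (rule mod_mult_self1)
  also have "\<dots> = e - 1" using assms(3) by simp
  finally show ?thesis .
qed

lemma Pinv:
  assumes "e dvd d" "e > 0" "length u = e" "d > 0"
  shows "(rep (d div e) u ! ((n - 1) mod length (rep (d div e) u)) =
          rep (d div e) u ! (length (rep (d div e) u) - 1))
       = (u ! ((n - 1) mod length u) = u ! (length u - 1))"
proof -
  have l: "length (rep (d div e) u) = d" using assms by simp
  have a: "rep (d div e) u ! ((n - 1) mod d) = u ! ((n - 1) mod e)"
    using nth_rep[of "(n - 1) mod d" "d div e" u] assms by (simp add: mod_mod_cancel)
  have b: "rep (d div e) u ! (d - 1) = u ! (e - 1)"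
    using nth_rep[of "d - 1" "d div e" u] assms mod_pred[OF assms(1,4,2)] by simp
  show ?thesis unfolding l using a b assms(3) by simp
qed

lemma flip_count:
  assumes "i < d" "j < d" "i \<noteq> j"
  shows "card {s :: bool list. length s = d \<and> s ! i = s ! j} = 2 ^ (d - 1)"
proof -
  let ?L = "{s :: bool list. length s = d}"
  let ?S = "{s :: bool list. length s = d \<and> s ! i = s ! j}"
  let ?f = "\<lambda>s::bool list. s[j := \<not> s ! j]"
  have ff: "?f (?f s) = s" if "length s = d" for s
    using that assms by simp
  have fl: "length (?f s) = d \<longleftrightarrow> length s = d" for s by simp
  have fc: "(?f s ! i = ?f s ! j) \<longleftrightarrow> \<not> (s ! i = s ! j)" if "length s = d" for s
    using that assms by simp
  have bij: "bij_betw ?f ?S (?L - ?S)"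
  proof (rule bij_betw_byWitness[where f' = ?f])
    show "\<forall>a\<in>?S. ?f (?f a) = a" using ff by blast
    show "\<forall>a\<in>?L - ?S. ?f (?f a) = a" using ff by blast
    show "?f ` ?S \<subseteq> ?L - ?S"
    proof
      fix x assume "x \<in> ?f ` ?S"
      then obtain s where s: "s \<in> ?S" "x = ?f s" by blast
      then show "x \<in> ?L - ?S" using fc[of s] fl[of s] by simp
    qed
    show "?f ` (?L - ?S) \<subseteq> ?S"
    proof
      fix x assume "x \<in> ?f ` (?L - ?S)"
      then obtain s where s: "s \<in> ?L - ?S" "x = ?f s" by blast
      then show "x \<in> ?S" using fc[of s] fl[of s] by simp
    qed
  qed
  have "card ?S = card (?L - ?S)" using bij_betw_same_card[OF bij] .
  moreover have "card (?L - ?S) = card ?L - card ?S"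
    by (rule card_Diff_subset) (use fin_len[of d] in \<open>auto intro: finite_subset\<close>)
  moreover have "card ?S \<le> card ?L" by (rule card_mono[OF fin_len]) auto
  moreover have "card ?L = 2 ^ d" by (rule card_len)
  moreover have "(2::nat) ^ d = 2 * 2 ^ (d - 1)" using assms by (cases d) auto
  ultimately show ?thesis by linarith
qed



lemma mobius_1: "mobius 1 = 1"
  unfolding mobius_def by (auto dest: prime_gt_1_nat)

lemma mobius_sq: "prime (p::nat) \<Longrightarrow> p ^ 2 dvd e \<Longrightarrow> mobius e = 0"
  unfolding mobius_def by auto

lemma mobius_mult_prime:
  fixes p e :: nat
  assumes p: "prime p" and pe: "\<not> p dvd e" and e: "e > 0"
  shows "mobius (p * e) = - mobius e"
proof -
  have sq: "(\<exists>q. prime q \<and> q ^ 2 dvd p * e) \<longleftrightarrow> (\<exists>q. prime q \<and> q ^ 2 dvd e)"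
  proof
    assume "\<exists>q. prime q \<and> q ^ 2 dvd p * e"
    then obtain q where q: "prime q" "q ^ 2 dvd p * e" by blast
    show "\<exists>q. prime q \<and> q ^ 2 dvd e"
    proof (cases "q = p")
      case True
      then have "p * p dvd p * e" using q by (simp add: power2_eq_square)
      then have "p dvd e" using p by (metis nat_mult_dvd_cancel1 prime_gt_0_nat)
      then show ?thesis using pe by blast
    next
      case False
      then have "coprime (q ^ 2) p" using q p by (simp add: primes_coprime)
      then have "q ^ 2 dvd e" using q(2) by (simp add: coprime_dvd_mult_right_iff)
      then show ?thesis using q by blast
    qed
  next
    assume "\<exists>q. prime q \<and> q ^ 2 dvd e"
    then show "\<exists>q. prime q \<and> q ^ 2 dvd p * e" by (meson dvd_mult)
  qed
  have pf: "prime_factors (p * e) = insert p (prime_factors e)"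
    using p e by (simp add: prime_factors_product prime_prime_factors)
  have np: "p \<notin> prime_factors e" using pe by (auto dest: in_prime_factors_imp_dvd)
  have "card (prime_factors (p * e)) = Suc (card (prime_factors e))"
    unfolding pf using np by simp
  then show ?thesis unfolding mobius_def sq by simp
qed

lemma sum_mobius:
  fixes m :: nat
  assumes m: "m > 0"
  shows "(\<Sum>e | e dvd m. mobius e) = (if m = 1 then 1 else 0)"
proof (cases "m = 1")
  case True
  have "{e. e dvd m} = {1}" using True by auto
  then show ?thesis using True mobius_1 by simp
next
  case False
  then obtain p where p: "prime p" "p dvd m" using m by (metis prime_factor_nat)
  let ?D = "{e. e dvd m}"
  let ?D1 = "{e. e dvd m \<and> \<not> p dvd e}"
  let ?D2 = "{e. e dvd m \<and> p dvd e}"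
  let ?D3 = "{e. e dvd m \<and> p dvd e \<and> \<not> p ^ 2 dvd e}"
  have fin: "finite ?D" using m by simp
  have "(\<Sum>e\<in>?D. mobius e) = (\<Sum>e\<in>?D1. mobius e) + (\<Sum>e\<in>?D2. mobius e)"
  proof -
    have e: "?D = ?D1 \<union> ?D2" by blast
    have "?D1 \<inter> ?D2 = {}" by blast
    moreover have "finite ?D1" by (rule finite_subset[OF _ fin]) blast
    moreover have "finite ?D2" by (rule finite_subset[OF _ fin]) blast
    ultimately have "(\<Sum>e\<in>?D1 \<union> ?D2. mobius e) = (\<Sum>e\<in>?D1. mobius e) + (\<Sum>e\<in>?D2. mobius e)"
      by (intro sum.union_disjoint)
    then show ?thesis unfolding e[symmetric] .
  qed
  also have "(\<Sum>e\<in>?D2. mobius e) = (\<Sum>e\<in>?D3. mobius e)"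
  proof (rule sum.mono_neutral_right)
    show "finite ?D2" by (rule finite_subset[OF _ fin]) blast
    show "?D3 \<subseteq> ?D2" by blast
    show "\<forall>e\<in>?D2 - ?D3. mobius e = 0"
    proof
      fix e assume "e \<in> ?D2 - ?D3"
      then have "p ^ 2 dvd e" by simp
      then show "mobius e = 0" by (rule mobius_sq[OF p(1)])
    qed
  qed
  also have "?D3 = (\<lambda>e. p * e) ` ?D1"
  proof
    show "?D3 \<subseteq> (\<lambda>e. p * e) ` ?D1"
    proof
      fix x assume x: "x \<in> ?D3"
      have "p dvd x" using x by blast
      then obtain k where k: "x = p * k" by (rule dvdE)
      have p0: "p > 0" using p by (simp add: prime_gt_0_nat)
      have "\<not> p ^ 2 dvd x" using x by blast
      then have "\<not> p * p dvd p * k" using k by (simp add: power2_eq_square)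
      then have "\<not> p dvd k" using nat_mult_dvd_cancel1[OF p0] by blast
      moreover have "k dvd m"
      proof -
        have "k dvd x" using k by simp
        moreover have "x dvd m" using x by blast
        ultimately show ?thesis by (rule dvd_trans)
      qed
      ultimately have "k \<in> ?D1" by blast
      then show "x \<in> (\<lambda>e. p * e) ` ?D1" using k by (rule rev_image_eqI)
    qed
  next
    show "(\<lambda>e. p * e) ` ?D1 \<subseteq> ?D3"
    proof
      fix x assume "x \<in> (\<lambda>e. p * e) ` ?D1"
      then obtain k where k: "x = p * k" "k dvd m" "\<not> p dvd k" by blast
      have "coprime p k" using k p by (simp add: prime_imp_coprime)
      then have "p * k dvd m" using divides_mult p(2) k(2) by blast
      moreover have "\<not> p ^ 2 dvd p * k"
      proof -
        have p0: "p > 0" using p by (simp add: prime_gt_0_nat)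
        show ?thesis using nat_mult_dvd_cancel1[OF p0, of p k] k(3) by (simp add: power2_eq_square)
      qed
      ultimately show "x \<in> ?D3" using k by simp
    qed
  qed
  also have "(\<Sum>e\<in>(\<lambda>e. p * e) ` ?D1. mobius e) = (\<Sum>e\<in>?D1. mobius (p * e))"
  proof -
    have p0: "p > 0" using p by (simp add: prime_gt_0_nat)
    have "inj_on (\<lambda>e. p * e) ?D1" using p0 by (simp add: inj_on_def)
    then show ?thesis using sum.reindex[of "\<lambda>e. p * e" ?D1 mobius] by (simp add: comp_def)
  qed
  also have "\<dots> = (\<Sum>e\<in>?D1. - mobius e)"
  proof (rule sum.cong[OF refl])
    fix e assume "e \<in> ?D1"
    then have "e > 0" "\<not> p dvd e" using m by (auto intro!: Nat.gr0I)
    then show "mobius (p * e) = - mobius e" using mobius_mult_prime p by blast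
  qed
  finally show ?thesis using False by (simp add: sum_negf)
qed



lemma div_set:
  fixes e d :: nat
  assumes "e dvd d" "d > 0"
  shows "{f. f dvd d div e} = {f \<in> {f. f dvd d}. e * f dvd d}"
proof -
  have e0: "e \<noteq> 0" using assms by (cases "e = 0") auto
  show ?thesis
  proof (intro set_eqI iffI)
    fix f assume "f \<in> {f. f dvd d div e}"
    then have "f * e dvd d" using dvd_div_iff_mult[OF e0 assms(1)] by simp
    then show "f \<in> {f \<in> {f. f dvd d}. e * f dvd d}"
      using dvd_mult_left[of f e d] by (simp add: mult.commute)
  next
    fix f assume "f \<in> {f \<in> {f. f dvd d}. e * f dvd d}"
    then have "f * e dvd d" by (simp add: mult.commute)
    then show "f \<in> {f. f dvd d div e}" using dvd_div_iff_mult[OF e0 assms(1)] by simp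
  qed
qed

lemma mobius_inv:
  fixes a :: "nat \<Rightarrow> int" and d :: nat
  assumes h: "\<And>m. m > 0 \<Longrightarrow> (2::int) ^ m = (\<Sum>f | f dvd m. a f)" and d: "d > 0"
  shows "(\<Sum>e | e dvd d. mobius e * 2 ^ (d div e)) = a d"
proof -
  let ?D = "{e. e dvd d}"
  have fin: "finite ?D" using d by simp
  have pos: "d div e > 0" if "e \<in> ?D" for e
    using that d by (metis dvd_div_eq_0_iff gr0I less_numeral_extra(3) mem_Collect_eq)
  have "(\<Sum>e\<in>?D. mobius e * 2 ^ (d div e)) =
        (\<Sum>e\<in>?D. \<Sum>f\<in>{f \<in> ?D. e * f dvd d}. mobius e * a f)"
  proof (rule sum.cong[OF refl])
    fix e assume e: "e \<in> ?D"
    have "mobius e * 2 ^ (d div e) = mobius e * (\<Sum>f | f dvd d div e. a f)"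
      using h[OF pos[OF e]] by simp
    also have "\<dots> = (\<Sum>f\<in>{f \<in> ?D. e * f dvd d}. mobius e * a f)"
      using div_set[of e d] e d by (simp add: sum_distrib_left)
    finally show "mobius e * 2 ^ (d div e) = (\<Sum>f\<in>{f \<in> ?D. e * f dvd d}. mobius e * a f)" .
  qed
  also have "\<dots> = (\<Sum>f\<in>?D. \<Sum>e | e \<in> ?D \<and> e * f dvd d. mobius e * a f)"
    by (rule sum.swap_restrict[OF fin fin])
  also have "\<dots> = (\<Sum>f\<in>?D. a f * (if d div f = 1 then 1 else 0))"
  proof (rule sum.cong[OF refl])
    fix f assume f: "f \<in> ?D"
    have "{e. e \<in> ?D \<and> e * f dvd d} = {e. e dvd d div f}"
      using div_set[of f d] f d by (auto simp: mult.commute)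
    then have "(\<Sum>e | e \<in> ?D \<and> e * f dvd d. mobius e * a f) = (\<Sum>e | e dvd d div f. mobius e) * a f"
      by (simp add: sum_distrib_right)
    also have "\<dots> = a f * (if d div f = 1 then 1 else 0)"
      using sum_mobius[OF pos[OF f]] by simp
    finally show "(\<Sum>e | e \<in> ?D \<and> e * f dvd d. mobius e * a f) = a f * (if d div f = 1 then 1 else 0)" .
  qed
  also have "\<dots> = (\<Sum>f\<in>?D. if f = d then a f else 0)"
  proof (rule sum.cong[OF refl])
    fix f assume f: "f \<in> ?D"
    have "d div f = 1 \<longleftrightarrow> f = d"
    proof
      assume "d div f = 1"
      then show "f = d" using f by (metis dvd_mult_div_cancel mem_Collect_eq mult.right_neutral)
    next
      assume "f = d" then show "d div f = 1" using d by simp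
    qed
    then show "a f * (if d div f = 1 then 1 else 0) = (if f = d then a f else 0)" by simp
  qed
  also have "\<dots> = a d" using fin by (simp add: sum.delta')
  finally show ?thesis .
qed



lemma div_split:
  fixes d :: nat and g :: "nat \<Rightarrow> int"
  assumes d: "d > 1"
  shows "(\<Sum>e | e dvd d. g e) = g 1 + g d + (\<Sum>e | e dvd d \<and> 1 < e \<and> e < d. g e)"
proof -
  let ?M = "{e. e dvd d \<and> 1 < e \<and> e < d}"
  have finM: "finite ?M" by (rule finite_subset[of _ "{..d}"]) auto
  have eq: "{e. e dvd d} = insert 1 (insert d ?M)"
  proof (intro set_eqI iffI)
    fix e assume "e \<in> {e. e dvd d}"
    then have e: "e dvd d" by simp
    then have "e \<le> d" using d by (intro dvd_imp_le) auto
    moreover have "e \<noteq> 0" using e d by (cases "e = 0") auto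
    ultimately show "e \<in> insert 1 (insert d ?M)" using e by (cases "e = 1"; cases "e = d") auto
  qed auto
  have "(\<Sum>e | e dvd d. g e) = (\<Sum>e \<in> insert 1 (insert d ?M). g e)" unfolding eq ..
  also have "\<dots> = g 1 + (g d + (\<Sum>e \<in> ?M. g e))"
    using finM d by (simp add: sum.insert)
  finally show ?thesis by simp
qed

lemma prime_M: "prime (d::nat) \<Longrightarrow> {e. e dvd d \<and> 1 < e \<and> e < d} = {}"
  by (auto simp: prime_nat_iff)

theorem lemma10:
  fixes n d :: nat
  assumes "n > 0" and "d > 0"
  shows "(d > 1 \<and> \<not> prime d \<longrightarrow>
           (if d dvd n then
              int (card (N0 n d)) = int (card (aperiodic_seqs d)) \<and>
              int (card (aperiodic_seqs d)) = (\<Sum>e | e dvd d. mobius e * 2 ^ (d div e))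
            else
              int (card (N0 n d)) = 2 ^ (d - 1) - 2
                 - (\<Sum>e | e dvd d \<and> 1 < e \<and> e < d. int (card (N0 n e)))))
       \<and> (prime d \<longrightarrow>
           (if d dvd n then
              int (card (N0 n d)) = int (card (aperiodic_seqs d)) \<and>
              int (card (aperiodic_seqs d)) = 2 ^ d - 2
            else int (card (N0 n d)) = 2 ^ (d - 1) - 2))"
proof -
  define P where "P = (\<lambda>s::bool list. s ! ((n - 1) mod length s) = s ! (length s - 1))"
  have NA: "{u \<in> aperiodic_seqs e. P u} = N0 n e" for e
    unfolding N0_def P_def aperiodic_seqs_def by auto
  have tot: "2 ^ m = (\<Sum>e | e dvd m. card (aperiodic_seqs e))" if m: "m > 0" for m
  proof -
    have "card {s :: bool list. length s = m \<and> True} = (\<Sum>e | e dvd m. card {u \<in> aperiodic_seqs e. True})"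
      by (rule decomp[OF m]) simp
    then show ?thesis using card_len[of m] by simp
  qed
  have totI: "(2::int) ^ m = (\<Sum>e | e dvd m. int (card (aperiodic_seqs e)))" if m: "m > 0" for m
  proof -
    have "int (2 ^ m) = int (\<Sum>e | e dvd m. card (aperiodic_seqs e))" using tot[OF m] by simp
    then show ?thesis by simp
  qed
  have cnt: "card {s. length s = d \<and> P s} = (\<Sum>e | e dvd d. card (N0 n e))"
  proof -
    have "card {s. length s = d \<and> P s} = (\<Sum>e | e dvd d. card {u \<in> aperiodic_seqs e. P u})"
      by (rule decomp[OF assms(2)]) (unfold P_def, rule Pinv, auto simp: assms)
    then show ?thesis unfolding NA .
  qed
  have A1: "aperiodic_seqs 1 = {s. length s = 1}"
    unfolding aperiodic_seqs_def periodic_seq_def by auto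
  have cA1: "card (aperiodic_seqs 1) = 2" unfolding A1 using card_len[of 1] by simp
  have cN1: "card (N0 n 1) = 2"
  proof -
    have "N0 n 1 = aperiodic_seqs 1" unfolding N0_def A1 by auto
    then show ?thesis using cA1 by simp
  qed
  show ?thesis
  proof (cases "d dvd n")
    case True
    have "(n - 1) mod d = d - 1" using mod_pred[OF True assms(1) assms(2)] .
    then have NAd: "N0 n d = aperiodic_seqs d" unfolding N0_def by auto
    show ?thesis
    proof (intro conjI impI)
      assume "1 < d \<and> \<not> prime d"
      have "(\<Sum>e | e dvd d. mobius e * 2 ^ (d div e)) = int (card (aperiodic_seqs d))"
        by (rule mobius_inv[OF totI assms(2)])
      then show "if d dvd n then
              int (card (N0 n d)) = int (card (aperiodic_seqs d)) \<and>
              int (card (aperiodic_seqs d)) = (\<Sum>e | e dvd d. mobius e * 2 ^ (d div e))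
            else
              int (card (N0 n d)) = 2 ^ (d - 1) - 2
                 - (\<Sum>e | e dvd d \<and> 1 < e \<and> e < d. int (card (N0 n e)))"
        using True NAd by simp
    next
      assume p: "prime d"
      then have d1: "d > 1" by (rule prime_gt_1_nat)
      have z: "(\<Sum>e\<in>{e. e dvd d \<and> 1 < e \<and> e < d}. int (card (aperiodic_seqs e))) = 0"
        unfolding prime_M[OF p] by simp
      have "(2::int) ^ d = int (card (aperiodic_seqs 1)) + int (card (aperiodic_seqs d))"
        using totI[OF assms(2)] div_split[OF d1, of "\<lambda>e. int (card (aperiodic_seqs e))"] z
        by simp
      then show "if d dvd n then
              int (card (N0 n d)) = int (card (aperiodic_seqs d)) \<and>
              int (card (aperiodic_seqs d)) = 2 ^ d - 2
            else int (card (N0 n d)) = 2 ^ (d - 1) - 2"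
        using True NAd cA1 by simp
    qed
  next
    case False
    define i where "i = (n - 1) mod d"
    have id: "i < d" unfolding i_def using assms by simp
    have ij: "i \<noteq> d - 1"
    proof
      assume "i = d - 1"
      then have "n = ((n - 1) div d + 1) * d" using assms unfolding i_def
        by (metis Suc_diff_1 add.commute add_Suc_right div_mult_mod_eq mult_Suc plus_1_eq_Suc)
      then show False using False by (metis dvd_triv_right)
    qed
    have "{s. length s = d \<and> P s} = {s :: bool list. length s = d \<and> s ! i = s ! (d - 1)}"
      unfolding P_def i_def by auto
    then have "card {s. length s = d \<and> P s} = 2 ^ (d - 1)"
      using flip_count[OF id _ ij] assms(2) by simp
    then have sumN: "(2::int) ^ (d - 1) = (\<Sum>e | e dvd d. int (card (N0 n e)))"
      using cnt by (metis of_nat_numeral of_nat_power of_nat_sum)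
    have d1: "d > 1"
    proof (rule ccontr)
      assume "\<not> d > 1"
      then have "d = 1" using assms by simp
      then show False using False by simp
    qed
    have main: "int (card (N0 n d)) = 2 ^ (d - 1) - 2
                 - (\<Sum>e | e dvd d \<and> 1 < e \<and> e < d. int (card (N0 n e)))"
      using sumN div_split[OF d1, of "\<lambda>e. int (card (N0 n e))"] cN1 by simp
    show ?thesis
    proof (intro conjI impI)
      assume "1 < d \<and> \<not> prime d"
      then show "if d dvd n then
              int (card (N0 n d)) = int (card (aperiodic_seqs d)) \<and>
              int (card (aperiodic_seqs d)) = (\<Sum>e | e dvd d. mobius e * 2 ^ (d div e))
            else
              int (card (N0 n d)) = 2 ^ (d - 1) - 2
                 - (\<Sum>e | e dvd d \<and> 1 < e \<and> e < d. int (card (N0 n e)))"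
        using False main by simp
    next
      assume p: "prime d"
      have z: "(\<Sum>e\<in>{e. e dvd d \<and> 1 < e \<and> e < d}. int (card (N0 n e))) = 0"
        unfolding prime_M[OF p] by simp
      show "if d dvd n then
              int (card (N0 n d)) = int (card (aperiodic_seqs d)) \<and>
              int (card (aperiodic_seqs d)) = 2 ^ d - 2
            else int (card (N0 n d)) = 2 ^ (d - 1) - 2"
        using False main z by simp
    qed
  qed
qed


end
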